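(* Let $\mathcal{X},\mathcal{Y},\mathcal{Z}$ be sets, $\mathcal{G}=\{g_1,\dots,g_K\}$ a finite set of maps $\mathcal{X}\to\mathcal{Z}$, and $\mathcal{H}$ a set of maps $\mathcal{Z}\to\mathbb{R}$. Fix arbitrary datasets $\mathcal{S}_t=((x_{t,1},y_{t,1}),\dots,(x_{t,m},y_{t,m}))$, $t=1,\dots,T$, all of size $m$. Assume that for every $t$ and every $g\in\mathcal{G}$, $\hat L_t(g)\in[0,C]$ and $\mathcal{R}_t(g)\le\beta(g,m)$. Run EWA-LL with $\pi_1$ uniform on $\mathcal{G}$ and $\eta=\frac{2}{C}\sqrt{\frac{2\log K}{T}}$. Then $$\frac{1}{T}\sum_{t=1}^T\mathbb{E}_{\hat g_t\sim\pi_t}\Big[\frac{1}{m}\sum_{i=1}^m\hat\ell_{t,i}\Big]\le\min_{1\le k\le K}\Bigg\{\frac{1}{T}\sum_{t=1}^T\inf_{h_t\in\mathcal{H}}\frac{1}{m}\sum_{i=1}^m\ell\big(h_t\circ g_k(x_{t,i}),y_{t,i}\big)+\beta(g_k,m)\Bigg\}+C\sqrt{\frac{\log K}{2T}}.$$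
   Context: Within-task algorithm: for each task $t$ and each $g\in\mathcal{G}$, an online algorithm processes $\mathcal{S}_t$ sequentially, producing at step $i$ a prediction $\hat y^g_{t,i}$ depending only on $g$, $x_{t,1},\dots,x_{t,i}$, $y_{t,1},\dots,y_{t,i-1}$. Let $\hat L_t(g)=\frac{1}{m}\sum_{i=1}^m\ell(\hat y^g_{t,i},y_{t,i})$ and $\mathcal{R}_t(g)=\hat L_t(g)-\inf_{h\in\mathcal{H}}\frac1m\sum_{i=1}^m\ell(h\circ g(x_{t,i}),y_{t,i})$. EWA-LL: given a prior $\pi_1$ on $\mathcal{G}$ and $\eta>0$, for $t=1,\dots,T$: draw $\hat g_t\sim\pi_t$; run the within-task algorithm on $\mathcal{S}_t$ with $\hat g_t$, incurring losses $\hat\ell_{t,i}=\ell(\hat y^{\hat g_t}_{t,i},y_{t,i})$; update $\pi_{t+1}(g_k)=\exp(-\eta\hat L_t(g_k))\pi_t(g_k)/\sum_{j=1}^K\exp(-\eta\hat L_t(g_j))\pi_t(g_j)$. $\mathbb{E}_{\hat g_t\sim\pi_t}$ is over the random draw of $\hat g_t$. *)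

theory Defs
  imports Complex_Main
begin

text \<open>Within-task algorithm: A g hist x gives the prediction for input x, given the
  representation g and the history hist of previously revealed pairs of the current task.
  Tasks t = 1..T, examples i = 1..m; data point i of task t is (xs t i, ys t i).\<close>

definition hist :: "(nat \<Rightarrow> nat \<Rightarrow> 'x) \<Rightarrow> (nat \<Rightarrow> nat \<Rightarrow> 'y) \<Rightarrow> nat \<Rightarrow> nat \<Rightarrow> ('x \<times> 'y) list" where
  "hist xs ys t i = map (\<lambda>j. (xs t j, ys t j)) [1..<i]"

definition pred :: "(('x \<Rightarrow> 'z) \<Rightarrow> ('x \<times> 'y) list \<Rightarrow> 'x \<Rightarrow> real)
    \<Rightarrow> (nat \<Rightarrow> nat \<Rightarrow> 'x) \<Rightarrow> (nat \<Rightarrow> nat \<Rightarrow> 'y) \<Rightarrow> nat \<Rightarrow> ('x \<Rightarrow> 'z) \<Rightarrow> nat \<Rightarrow> real" where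
  "pred A xs ys t g i = A g (hist xs ys t i) (xs t i)"

definition Lhat :: "(real \<Rightarrow> 'y \<Rightarrow> real) \<Rightarrow> (('x \<Rightarrow> 'z) \<Rightarrow> ('x \<times> 'y) list \<Rightarrow> 'x \<Rightarrow> real)
    \<Rightarrow> (nat \<Rightarrow> nat \<Rightarrow> 'x) \<Rightarrow> (nat \<Rightarrow> nat \<Rightarrow> 'y) \<Rightarrow> nat \<Rightarrow> nat \<Rightarrow> ('x \<Rightarrow> 'z) \<Rightarrow> real" where
  "Lhat loss A xs ys m t g = (1 / real m) * (\<Sum>i=1..m. loss (pred A xs ys t g i) (ys t i))"

definition emp :: "(real \<Rightarrow> 'y \<Rightarrow> real) \<Rightarrow> (nat \<Rightarrow> nat \<Rightarrow> 'x) \<Rightarrow> (nat \<Rightarrow> nat \<Rightarrow> 'y) \<Rightarrow> nat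
    \<Rightarrow> nat \<Rightarrow> ('x \<Rightarrow> 'z) \<Rightarrow> ('z \<Rightarrow> real) \<Rightarrow> real" where
  "emp loss xs ys m t g h = (1 / real m) * (\<Sum>i=1..m. loss ((h \<circ> g) (xs t i)) (ys t i))"

definition best :: "(real \<Rightarrow> 'y \<Rightarrow> real) \<Rightarrow> ('z \<Rightarrow> real) set \<Rightarrow> (nat \<Rightarrow> nat \<Rightarrow> 'x) \<Rightarrow> (nat \<Rightarrow> nat \<Rightarrow> 'y)
    \<Rightarrow> nat \<Rightarrow> nat \<Rightarrow> ('x \<Rightarrow> 'z) \<Rightarrow> real" where
  "best loss H xs ys m t g = (INF h\<in>H. emp loss xs ys m t g h)"

definition regret where
  "regret loss A H xs ys m t g = Lhat loss A xs ys m t g - best loss H xs ys m t g"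

text \<open>EWA-LL weights over indices k = 1..K.  Given L t k = \<open>\<hat>L_t(g_k)\<close>,
  ewa L K eta t k is \<pi>_t(g_k) for t \<ge> 1 (\<pi>_1 uniform); the value at t = 0 is irrelevant.\<close>
fun ewa :: "(nat \<Rightarrow> nat \<Rightarrow> real) \<Rightarrow> nat \<Rightarrow> real \<Rightarrow> nat \<Rightarrow> nat \<Rightarrow> real" where
  "ewa L K eta 0 k = 1 / real K"
| "ewa L K eta (Suc t) k =
     (if t = 0 then 1 / real K
      else exp (- eta * L t k) * ewa L K eta t k /
           (\<Sum>j=1..K. exp (- eta * L t j) * ewa L K eta t j))"

end

theory Submission imports Defs "HOL-Probability.Hoeffding" begin

lemma exp_chord:
  fixes l C x :: real
  assumes "l \<ge> 0" "C > 0" "0 \<le> x" "x \<le> C"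
  shows "exp (- l * x) \<le> (1 - x / C) + (x / C) * exp (- l * C)"
proof -
  have cv: "convex_on UNIV (\<lambda>x. exp (l * x))" by (rule convex_on_exp) (use assms in auto)
  have "exp (l * ((1 - x/C) *\<^sub>R 0 + (x/C) *\<^sub>R (-C))) \<le> (1 - x/C) * exp (l * 0) + (x/C) * exp (l * (-C))"
    by (rule convex_onD[OF cv]) (use assms in auto)
  moreover have "(1 - x/C) *\<^sub>R 0 + (x/C) *\<^sub>R (-C) = - x" using assms by simp
  ultimately show ?thesis by simp
qed

lemma hoeffding_finite:
  fixes w x :: "nat \<Rightarrow> real" and I :: "nat set" and l C :: real
  assumes fin: "finite I" and w0: "\<And>k. k \<in> I \<Longrightarrow> w k \<ge> 0" and w1: "(\<Sum>k\<in>I. w k) = 1"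
    and xb: "\<And>k. k \<in> I \<Longrightarrow> 0 \<le> x k \<and> x k \<le> C" and C: "C > 0" and l: "l \<ge> 0"
  shows "(\<Sum>k\<in>I. w k * exp (- l * x k)) \<le> exp (- l * (\<Sum>k\<in>I. w k * x k) + l\<^sup>2 * C\<^sup>2 / 8)"
proof -
  define \<mu> where "\<mu> = (\<Sum>k\<in>I. w k * x k)"
  define p where "p = \<mu> / C"
  define h where "h = l * C"
  have mu0: "\<mu> \<ge> 0" unfolding \<mu>_def using w0 xb by (intro sum_nonneg) auto
  have "\<mu> \<le> (\<Sum>k\<in>I. w k * C)" unfolding \<mu>_def using w0 xb by (intro sum_mono mult_left_mono) auto
  also have "\<dots> = C" using w1 by (simp add: sum_distrib_right[symmetric])
  finally have muC: "\<mu> \<le> C" .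
  have p01: "0 \<le> p" "p \<le> 1" using mu0 muC C by (auto simp: p_def)
  have h0: "h \<ge> 0" using l C by (simp add: h_def)
  have "(\<Sum>k\<in>I. w k * exp (- l * x k)) \<le> (\<Sum>k\<in>I. w k * ((1 - x k / C) + (x k / C) * exp (- l * C)))"
    using w0 xb exp_chord[OF l C] by (intro sum_mono mult_left_mono) auto
  also have "\<dots> = (\<Sum>k\<in>I. w k) - (\<Sum>k\<in>I. w k * x k) / C + (\<Sum>k\<in>I. w k * x k) / C * exp (- l * C)"
    by (simp add: algebra_simps sum_distrib_left sum_distrib_right sum_subtractf sum_divide_distrib sum.distrib)
  also have "\<dots> = 1 - p + p * exp (- h)" using w1 by (simp add: p_def \<mu>_def h_def)
  finally have s1: "(\<Sum>k\<in>I. w k * exp (- l * x k)) \<le> 1 - p + p * exp (- h)" .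
  define q where "q = 1 - p"
  have q0: "q \<ge> 0" using p01 by (simp add: q_def)
  have pos: "1 + q * (exp h - 1) > 0" using q0 h0 by (intro add_pos_nonneg mult_nonneg_nonneg) auto
  have aux: "- h * q + ln (1 + q * (exp h - 1)) \<le> h\<^sup>2 / 8"
    using Hoeffdings_lemma_aux[OF h0 q0] by simp
  hence "ln (1 + q * (exp h - 1)) \<le> h\<^sup>2 / 8 + h * q" by simp
  hence "1 + q * (exp h - 1) \<le> exp (h\<^sup>2 / 8 + h * q)" using pos by (metis exp_le_cancel_iff exp_ln)
  hence "exp (- h) * (1 + q * (exp h - 1)) \<le> exp (- h) * exp (h\<^sup>2 / 8 + h * q)" by simp
  moreover have "exp (- h) * (1 + q * (exp h - 1)) = 1 - p + p * exp (- h)"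
    by (simp add: q_def algebra_simps exp_minus_inverse)
  moreover have "exp (- h) * exp (h\<^sup>2 / 8 + h * q) = exp (- l * \<mu> + l\<^sup>2 * C\<^sup>2 / 8)"
  proof -
    have "- h + (h\<^sup>2 / 8 + h * q) = - l * \<mu> + l\<^sup>2 * C\<^sup>2 / 8"
      using C by (simp add: q_def p_def h_def field_simps power2_eq_square)
    thus ?thesis by (metis exp_add)
  qed
  ultimately show ?thesis using s1 unfolding \<mu>_def by linarith
qed

definition Sc :: "(nat \<Rightarrow> nat \<Rightarrow> real) \<Rightarrow> nat \<Rightarrow> nat \<Rightarrow> real" where
  "Sc L n k = (\<Sum>s=1..n. L s k)"
definition Wc :: "(nat \<Rightarrow> nat \<Rightarrow> real) \<Rightarrow> nat \<Rightarrow> real \<Rightarrow> nat \<Rightarrow> real" where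
  "Wc L K eta n = (\<Sum>j=1..K. exp (- eta * Sc L n j))"

lemma Wc_pos: "K \<ge> 1 \<Longrightarrow> Wc L K eta n > 0"
  unfolding Wc_def by (intro sum_pos) auto

lemma ewa_closed:
  assumes K: "K \<ge> 1" and t: "t \<ge> 1"
  shows "ewa L K eta t k = exp (- eta * Sc L (t - 1) k) / Wc L K eta (t - 1)"
  using t
proof (induction t arbitrary: k rule: dec_induct)
  case base
  show ?case by (simp add: Sc_def Wc_def)
next
  case (step n)
  have Wp: "Wc L K eta (n - 1) > 0" using Wc_pos[OF K] .
  have S: "\<And>j. Sc L n j = Sc L (n - 1) j + L n j"
    using step(1) by (cases n) (auto simp: Sc_def)
  have e: "\<And>j. exp (- eta * Sc L n j) = exp (- eta * L n j) * exp (- eta * Sc L (n - 1) j)"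
    by (simp add: S distrib_left exp_diff exp_minus field_simps)
  have e2: "\<And>j. exp (- (eta * L n j)) * exp (- (eta * Sc L (n - Suc 0) j)) = exp (- (eta * Sc L n j))"
    using e by simp
  have "ewa L K eta (Suc n) k = exp (- eta * L n k) * (exp (- eta * Sc L (n - 1) k) / Wc L K eta (n - 1)) /
        (\<Sum>j=1..K. exp (- eta * L n j) * (exp (- eta * Sc L (n - 1) j) / Wc L K eta (n - 1)))"
    using step by simp
  also have "(\<Sum>j=1..K. exp (- eta * L n j) * (exp (- eta * Sc L (n - 1) j) / Wc L K eta (n - 1)))
      = Wc L K eta n / Wc L K eta (n - 1)"
    by (simp add: Wc_def e2 sum_divide_distrib)
  also have "exp (- eta * L n k) * (exp (- eta * Sc L (n - 1) k) / Wc L K eta (n - 1)) = 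
      exp (- eta * Sc L n k) / Wc L K eta (n - 1)" by (simp add: e2)
  finally show ?case using Wp Wc_pos[OF K, of L eta n] by simp
qed

lemma ewa_main:
  fixes L :: "nat \<Rightarrow> nat \<Rightarrow> real"
  assumes K: "K \<ge> 1" and C: "C > 0" and eta: "eta \<ge> 0"
    and bnd: "\<And>t k. t \<in> {1..T} \<Longrightarrow> k \<in> {1..K} \<Longrightarrow> 0 \<le> L t k \<and> L t k \<le> C"
    and k: "k \<in> {1..K}"
  shows "eta * (\<Sum>t=1..T. \<Sum>j=1..K. ewa L K eta t j * L t j)
         \<le> eta * Sc L T k + ln (real K) + real T * eta\<^sup>2 * C\<^sup>2 / 8"
proof -
  define E where "E t = (\<Sum>j=1..K. ewa L K eta t j * L t j)" for t
  have step: "ln (Wc L K eta t) - ln (Wc L K eta (t - 1)) \<le> - eta * E t + eta\<^sup>2 * C\<^sup>2 / 8"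
    if t: "t \<in> {1..T}" for t
  proof -
    have t1: "t \<ge> 1" using t by simp
    have Wp: "Wc L K eta (t - 1) > 0" using Wc_pos[OF K] .
    have S: "\<And>j. Sc L t j = Sc L (t - 1) j + L t j"
      using t1 by (cases t) (auto simp: Sc_def)
    have e: "\<And>j. exp (- eta * Sc L t j) = exp (- eta * L t j) * exp (- eta * Sc L (t - 1) j)"
      by (simp add: S distrib_left exp_diff exp_minus field_simps)
    have e2: "\<And>j. exp (- (eta * L t j)) * exp (- (eta * Sc L (t - Suc 0) j)) = exp (- (eta * Sc L t j))"
      using e by simp
    have cl: "\<And>j. ewa L K eta t j = exp (- eta * Sc L (t - 1) j) / Wc L K eta (t - 1)"
      using ewa_closed[OF K t1] .
    have w0: "\<And>j. ewa L K eta t j \<ge> 0" using Wp by (simp add: cl)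
    have w1: "(\<Sum>j=1..K. ewa L K eta t j) = 1"
      using Wp by (simp add: cl sum_divide_distrib[symmetric] Wc_def)
    have "(\<Sum>j=1..K. ewa L K eta t j * exp (- eta * L t j)) = Wc L K eta t / Wc L K eta (t - 1)"
      by (simp add: cl Wc_def e2 sum_divide_distrib mult.commute)
    moreover have "(\<Sum>j=1..K. ewa L K eta t j * exp (- eta * L t j)) \<le> exp (- eta * E t + eta\<^sup>2 * C\<^sup>2 / 8)"
      unfolding E_def by (rule hoeffding_finite[OF _ _ w1 _ C eta]) (use w0 bnd t in auto)
    ultimately have "Wc L K eta t / Wc L K eta (t - 1) \<le> exp (- eta * E t + eta\<^sup>2 * C\<^sup>2 / 8)" by simp
    hence "ln (Wc L K eta t / Wc L K eta (t - 1)) \<le> - eta * E t + eta\<^sup>2 * C\<^sup>2 / 8"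
      using Wp Wc_pos[OF K, of L eta t] by (metis divide_pos_pos exp_le_cancel_iff exp_ln)
    thus ?thesis using Wp Wc_pos[OF K, of L eta t] by (simp add: ln_div)
  qed
  have "ln (Wc L K eta T) - ln (Wc L K eta 0) = (\<Sum>t=1..T. ln (Wc L K eta t) - ln (Wc L K eta (t - 1)))"
  proof -
    have "(\<Sum>t=1..T. ln (Wc L K eta t) - ln (Wc L K eta (t - 1))) = (\<Sum>i=0..<T. ln (Wc L K eta (Suc i)) - ln (Wc L K eta i))"
      by (rule sum.reindex_bij_witness[of _ Suc "\<lambda>t. t - 1"]) auto
    also have "\<dots> = ln (Wc L K eta T) - ln (Wc L K eta 0)" by (rule sum_Suc_diff') simp
    finally show ?thesis by simp
  qed
  also have "\<dots> \<le> (\<Sum>t=1..T. - eta * E t + eta\<^sup>2 * C\<^sup>2 / 8)" by (intro sum_mono step)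
  also have "\<dots> = - eta * (\<Sum>t=1..T. E t) + real T * eta\<^sup>2 * C\<^sup>2 / 8"
    by (simp add: sum.distrib sum_distrib_left sum_negf sum_subtractf)
  finally have A: "ln (Wc L K eta T) - ln (Wc L K eta 0) \<le> - eta * (\<Sum>t=1..T. E t) + real T * eta\<^sup>2 * C\<^sup>2 / 8" .
  have W0: "Wc L K eta 0 = real K" by (simp add: Wc_def Sc_def)
  have "exp (- eta * Sc L T k) \<le> Wc L K eta T"
    unfolding Wc_def using k by (intro member_le_sum) auto
  hence "- eta * Sc L T k \<le> ln (Wc L K eta T)"
    using Wc_pos[OF K, of L eta T] by (metis exp_le_cancel_iff exp_ln)
  with A W0 show ?thesis unfolding E_def by simp
qed

theorem theorem2:
  fixes g :: "nat \<Rightarrow> 'x \<Rightarrow> 'z"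
    and H :: "('z \<Rightarrow> real) set"
    and loss :: "real \<Rightarrow> 'y \<Rightarrow> real"
    and A :: "('x \<Rightarrow> 'z) \<Rightarrow> ('x \<times> 'y) list \<Rightarrow> 'x \<Rightarrow> real"
    and xs :: "nat \<Rightarrow> nat \<Rightarrow> 'x" and ys :: "nat \<Rightarrow> nat \<Rightarrow> 'y"
    and K T m :: nat and C :: real
    and \<beta> :: "('x \<Rightarrow> 'z) \<Rightarrow> nat \<Rightarrow> real"
  assumes K: "K \<ge> 1" and T: "T \<ge> 1" and m: "m \<ge> 1" and C: "C > 0"
    and inj: "inj_on g {1..K}"
    and H_ne: "H \<noteq> {}"
    and H_bdd: "\<And>t k. t \<in> {1..T} \<Longrightarrow> k \<in> {1..K} \<Longrightarrow>
                   bdd_below (emp loss xs ys m t (g k) ` H)"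
    and bounded: "\<And>t k. t \<in> {1..T} \<Longrightarrow> k \<in> {1..K} \<Longrightarrow>
                   0 \<le> Lhat loss A xs ys m t (g k) \<and> Lhat loss A xs ys m t (g k) \<le> C"
    and regret: "\<And>t k. t \<in> {1..T} \<Longrightarrow> k \<in> {1..K} \<Longrightarrow>
                   regret loss A H xs ys m t (g k) \<le> \<beta> (g k) m"
  shows "(1 / real T) * (\<Sum>t=1..T. \<Sum>k=1..K.
            ewa (\<lambda>t k. Lhat loss A xs ys m t (g k)) K (2 / C * sqrt (2 * ln (real K) / real T)) t k
              * Lhat loss A xs ys m t (g k))
         \<le> Min ((\<lambda>k. (1 / real T) * (\<Sum>t=1..T. best loss H xs ys m t (g k)) + \<beta> (g k) m) ` {1..K})
           + C * sqrt (ln (real K) / (2 * real T))"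
proof -
  define L where "L = (\<lambda>t k. Lhat loss A xs ys m t (g k))"
  define eta where "eta = 2 / C * sqrt (2 * ln (real K) / real T)"
  define E where "E = (\<Sum>t=1..T. \<Sum>k=1..K. ewa L K eta t k * L t k)"
  define s where "s = sqrt (ln (real K) / (2 * real T))"
  have Tp: "real T > 0" using T by simp
  have key: "(1 / real T) * E \<le> (1 / real T) * Sc L T k + C * s" if k: "k \<in> {1..K}" for k
  proof (cases "K = 1")
    case True
    have "ewa L K eta t 1 = 1" if "t \<in> {1..T}" for t
      using ewa_closed[OF K, of t L eta 1] that True by (simp add: Wc_def)
    hence "E = Sc L T 1" unfolding E_def Sc_def using True by simp
    moreover have "k = 1" using k True by simp
    moreover have "s = 0" using True by (simp add: s_def)
    ultimately show ?thesis by simp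
  next
    case False
    hence K2: "real K > 1" using K by simp
    define a where "a = ln (real K)"
    have a: "a > 0" using K2 by (simp add: a_def)
    have s0: "s > 0" using a Tp by (simp add: s_def a_def)
    have ss: "s\<^sup>2 = a / (2 * real T)" using a Tp by (simp add: s_def a_def)
    have q: "2 * a / real T = 2\<^sup>2 * (a / (2 * real T))" using Tp by (simp add: field_simps power2_eq_square)
    have "sqrt (2 * a / real T) = sqrt (2\<^sup>2 * (a / (2 * real T)))" by (subst q) (rule refl)
    also have "\<dots> = 2 * s" unfolding real_sqrt_mult s_def a_def by simp
    finally have eta': "eta = 4 * s / C" by (simp add: eta_def a_def[symmetric])
    have etap: "eta > 0" using s0 C by (simp add: eta')
    have main: "eta * E \<le> eta * Sc L T k + a + real T * eta\<^sup>2 * C\<^sup>2 / 8"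
      unfolding E_def a_def
      by (rule ewa_main[OF K C _ _ k]) (use etap bounded in \<open>auto simp: L_def\<close>)
    have r1: "real T * eta\<^sup>2 * C\<^sup>2 / 8 = a" using C Tp ss
      by (simp add: eta' field_simps power2_eq_square)
    have r2: "eta * real T * C * s = 2 * a" using C Tp ss
      by (simp add: eta' field_simps power2_eq_square)
    have "eta * real T * ((1 / real T) * E) \<le> eta * real T * ((1 / real T) * Sc L T k + C * s)"
    proof -
      have "eta * real T * ((1 / real T) * E) = eta * E" using Tp by simp
      also have "\<dots> \<le> eta * Sc L T k + 2 * a" using main r1 by linarith
      also have "\<dots> = eta * real T * ((1 / real T) * Sc L T k + C * s)"
        using Tp r2 by (simp add: algebra_simps)
      finally show ?thesis .
    qed
    moreover have "eta * real T > 0" using etap Tp by simp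
    ultimately show ?thesis using mult_le_cancel_left_pos by blast
  qed
  have fin: "finite {1..K}" "{1..K} \<noteq> {}" using K by auto
  define F where "F = (\<lambda>k. (1 / real T) * (\<Sum>t=1..T. best loss H xs ys m t (g k)) + \<beta> (g k) m)"
  obtain k where k: "k \<in> {1..K}" "Min (F ` {1..K}) = F k"
  proof -
    have "Min (F ` {1..K}) \<in> F ` {1..K}" using fin by (intro Min_in) auto
    thus ?thesis using that by (metis imageE)
  qed
  have "Sc L T k \<le> (\<Sum>t=1..T. best loss H xs ys m t (g k) + \<beta> (g k) m)"
    unfolding Sc_def L_def
  proof (intro sum_mono)
    fix t assume "t \<in> {1..T}"
    from regret[OF this k(1)] show "Lhat loss A xs ys m t (g k) \<le> best loss H xs ys m t (g k) + \<beta> (g k) m"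
      by (simp add: regret_def)
  qed
  hence "(1 / real T) * Sc L T k \<le> F k"
    using Tp by (simp add: F_def sum.distrib field_simps)
  with key[OF k(1)] k(2) have "(1 / real T) * E \<le> Min (F ` {1..K}) + C * s" by linarith
  thus ?thesis unfolding E_def L_def eta_def F_def s_def .
qed

end
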